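(* Let $N\ge 1$, $d\ge 1$, $T>0$, $M>0$, and let $\alpha=(\alpha_1,\dots,\alpha_N)\in\mathcal U_M$. Let $(x_i,v_i)_{i=1}^N$, with $x_i(t),v_i(t)\in\mathbb R^d$, solve on $[0,T]$ $$\dot x_i=v_i,\qquad \dot v_i=-\alpha_i v_i+(1-\alpha_i)\frac1N\sum_{j=1}^N (v_j-v_i),\qquad i=1,\dots,N,$$ and let $\bar v=\frac1N\sum_i v_i$. Assume $\bar v(0)\neq 0$, put $e=\bar v(0)/\|\bar v(0)\|$, $\xi_i=\langle v_i,e\rangle$, $\bar\xi=\frac1N\sum_i\xi_i$, and assume $\xi_1(0)\ge\xi_2(0)\ge\dots\ge\xi_N(0)$. Then $\bar v(t)\neq 0$ and $\bar\xi(t)>0$ for all $t\in[0,T]$. Moreover, for every $\tau\in[0,T]$ and every $i$: if $\xi_i(\tau)\ge 0$ then $\xi_i(t)\ge 0$ for all $t\in[\tau,T]$, and if $\xi_i(\tau)>0$ then $\xi_i(t)>0$ for all $t\in[\tau,T]$.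
   Context: $\mathcal U_M$ denotes the set of measurable maps $\alpha:[0,T]\to[0,1]^N$ such that $\sum_{i=1}^N\alpha_i(t)\le M$ for all $t\in[0,T]$. (This is a collective migration model with target velocity $0$, in which $\alpha_i$ balances attraction to the target velocity against alignment with the group.) *)

theory Defs
  imports "HOL-Analysis.Analysis"
begin

text \<open>Controls are indexed by i < N (0-based). U_M: measurable maps [0,T] to [0,1]^N
  with componentwise sum at most M on [0,T].\<close>
definition U_M :: "nat \<Rightarrow> real \<Rightarrow> real \<Rightarrow> (real \<Rightarrow> nat \<Rightarrow> real) set" where
  "U_M N T M = {\<alpha>. (\<forall>i<N. (\<lambda>t. \<alpha> t i) \<in> borel_measurable (restrict_space lborel {0..T})) \<and>
      (\<forall>t\<in>{0..T}. (\<forall>i<N. \<alpha> t i \<in> {0..1}) \<and> (\<Sum>i<N. \<alpha> t i) \<le> M)}"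

end

theory Submission
  imports Defs
begin

lemma key_nonneg:
  fixes f \<phi> :: "real \<Rightarrow> real" and a b :: real
  assumes cont: "continuous_on {a..b} f"
   and int: "\<And>s t. a \<le> s \<Longrightarrow> s \<le> t \<Longrightarrow> t \<le> b \<Longrightarrow> (\<phi> has_integral (f t - f s)) {s..t}"
   and low: "\<And>r. r\<in>{a..b} \<Longrightarrow> \<phi> r \<ge> - max (f r) 0"
   and fa: "f a \<ge> 0" and t: "t \<in> {a..b}"
  shows "f t \<ge> 0"
proof (rule ccontr)
  assume ft: "\<not> f t \<ge> 0"
  define S where "S = {s \<in> {a..t}. 0 \<le> f s}"
  have ct: "continuous_on {a..t} f" using cont t by (auto intro: continuous_on_subset)
  have cS: "closed S" unfolding S_def
    by (rule continuous_on_closed_Collect_le[OF continuous_on_const ct closed_atLeastAtMost])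
  have aS: "a \<in> S" using t fa by (auto simp: S_def)
  have bS: "bdd_above S" by (auto simp: S_def bdd_above_def)
  define t1 where "t1 = Sup S"
  have t1S: "t1 \<in> S" unfolding t1_def using closed_contains_Sup[OF _ bS cS] aS by auto
  have le: "\<And>r. r \<in> S \<Longrightarrow> r \<le> t1" unfolding t1_def using bS by (simp add: cSup_upper)
  have t1t: "t1 < t" using t1S ft by (auto simp: S_def less_le)
  have neg: "\<And>r. r \<in> {t1<..<t} \<Longrightarrow> f r < 0"
  proof (rule ccontr)
    fix r assume r: "r \<in> {t1<..<t}" "\<not> f r < 0"
    then have "r \<in> S" using t1S by (auto simp: S_def)
    then show False using le r by force
  qed
  have a1: "a \<le> t1" using t1S by (auto simp: S_def)
  have I: "(\<phi> has_integral (f t - f t1)) {t1..t}" using int a1 t1t t by auto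
  then have I': "(\<phi> has_integral (f t - f t1)) {t1<..<t}"
    using has_integral_open_interval[of \<phi> _ t1 t] by simp
  have "0 \<le> f t - f t1"
  proof (rule has_integral_le[OF has_integral_0 I'])
    fix r assume r: "r \<in> {t1<..<t}"
    then have "f r < 0" by (rule neg)
    moreover have "r \<in> {a..b}" using r a1 t by auto
    ultimately show "0 \<le> \<phi> r" using low[of r] by auto
  qed
  then show False using t1S ft by (auto simp: S_def)
qed

lemma key_pos:
  fixes f \<phi> :: "real \<Rightarrow> real" and a b :: real
  assumes cont: "continuous_on {a..b} f"
   and int: "\<And>s t. a \<le> s \<Longrightarrow> s \<le> t \<Longrightarrow> t \<le> b \<Longrightarrow> (\<phi> has_integral (f t - f s)) {s..t}"
   and low: "\<And>r. r\<in>{a..b} \<Longrightarrow> \<phi> r \<ge> - max (f r) 0"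
   and fa: "f a > 0" and t: "t \<in> {a..b}"
  shows "f t > 0"
proof (rule ccontr)
  assume ft: "\<not> f t > 0"
  have nn: "\<And>r. r \<in> {a..b} \<Longrightarrow> f r \<ge> 0"
    using key_nonneg[OF cont int low] fa by auto
  define Z where "Z = {s \<in> {a..t}. f s \<le> 0}"
  have ct: "continuous_on {a..t} f" using cont t by (auto intro: continuous_on_subset)
  have cZ: "closed Z" unfolding Z_def
    by (rule continuous_on_closed_Collect_le[OF ct continuous_on_const closed_atLeastAtMost])
  have tZ: "t \<in> Z" using t ft by (auto simp: Z_def)
  have bZ: "bdd_below Z" by (auto simp: Z_def bdd_below_def)
  define t1 where "t1 = Inf Z"
  have t1Z: "t1 \<in> Z" unfolding t1_def using closed_contains_Inf[OF _ bZ cZ] tZ by auto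
  have le: "\<And>r. r \<in> Z \<Longrightarrow> t1 \<le> r" unfolding t1_def using bZ by (simp add: cInf_lower)
  have at1: "a < t1" using t1Z fa by (auto simp: Z_def less_le)
  have t1t: "t1 \<le> t" using t1Z by (auto simp: Z_def)
  have t1b: "t1 \<in> {a..b}" using at1 t1t t by auto
  have f1: "f t1 = 0" using t1Z nn[OF t1b] by (auto simp: Z_def)
  have posb: "\<And>r. r \<in> {a..<t1} \<Longrightarrow> f r > 0"
  proof (rule ccontr)
    fix r assume r: "r \<in> {a..<t1}" "\<not> f r > 0"
    then have "r \<in> Z" using t1t by (auto simp: Z_def)
    then show False using le r by force
  qed
  define s where "s = max a (t1 - 1/2)"
  have s1: "s < t1" "a \<le> s" using at1 by (auto simp: s_def)
  have fs: "f s > 0" using posb s1 by auto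
  have cs: "continuous_on {s..t1} f" using cont s1 t1b by (auto intro: continuous_on_subset)
  obtain u where u: "u \<in> {s..t1}" "\<And>y. y \<in> {s..t1} \<Longrightarrow> f y \<le> f u"
    using continuous_attains_sup[OF compact_Icc _ cs] s1 by auto
  have fu: "f u > 0" using u(2)[of s] s1 fs by auto
  have I: "(\<phi> has_integral (f t1 - f u)) {u..t1}" using int u s1 t1b by auto
  have "(t1 - u) * (- f u) \<le> f t1 - f u"
  proof (rule has_integral_le[OF _ I])
    show "((\<lambda>x. - f u) has_integral (t1 - u) * (- f u)) {u..t1}"
      using has_integral_const_real[of "- f u" u t1] u by simp
    fix r assume r: "r \<in> {u..t1}"
    then have rb: "r \<in> {a..b}" using u s1 t1b by auto
    have "f r \<le> f u" using u r by auto
    then show "- f u \<le> \<phi> r" using low[OF rb] nn[OF rb] by auto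
  qed
  moreover have "t1 - u \<le> 1/2" using u s_def by auto
  then have "(t1 - u) * f u \<le> (1/2) * f u" using fu by (intro mult_right_mono) auto
  ultimately have "f u \<le> (1/2) * f u" using f1 by (simp add: algebra_simps)
  then show False using fu by auto
qed

lemma from0:
  fixes g F :: "real \<Rightarrow> real"
  assumes T: "0 \<le> T" and h: "\<And>t. t\<in>{0..T} \<Longrightarrow> (g has_integral (F t - F 0)) {0..t}"
  shows "\<And>s t. 0 \<le> s \<Longrightarrow> s \<le> t \<Longrightarrow> t \<le> T \<Longrightarrow> (g has_integral (F t - F s)) {s..t}"
    and "continuous_on {0..T} F"
proof -
  have hT: "(g has_integral (F T - F 0)) {0..T}" using h T by simp
  then have gi: "g integrable_on {0..T}" by (rule has_integral_integrable)
  fix s t :: real assume st: "0 \<le> s" "s \<le> t" "t \<le> T"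
  have sub: "{s..t} \<subseteq> {0..T}" using st by simp
  have "g integrable_on {s..t}" by (rule integrable_subinterval_real[OF gi sub])
  then obtain k where k: "(g has_integral k) {s..t}" by blast
  have hs: "(g has_integral (F s - F 0)) {0..s}" using h st by simp
  have ht: "(g has_integral (F t - F 0)) {0..t}" using h st by simp
  have "(g has_integral (F s - F 0 + k)) {0..t}"
    by (rule has_integral_combine[OF st(1,2) hs k])
  then have "F s - F 0 + k = F t - F 0" by (rule has_integral_unique[OF _ ht])
  then have "k = F t - F s" by simp
  then show "(g has_integral (F t - F s)) {s..t}" using k by simp
next
  have hT: "(g has_integral (F T - F 0)) {0..T}" using h T by simp
  then have gi: "g integrable_on {0..T}" by (rule has_integral_integrable)
  have c: "continuous_on {0..T} (\<lambda>x. F 0 + integral {0..x} g)"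
    by (rule continuous_on_add[OF continuous_on_const indefinite_integral_continuous_1[OF gi]])
  have e: "\<And>x. x \<in> {0..T} \<Longrightarrow> F 0 + integral {0..x} g = F x"
  proof -
    fix x assume x: "x \<in> {0..T}"
    have "integral {0..x} g = F x - F 0" by (rule integral_unique[OF h[OF x]])
    then show "F 0 + integral {0..x} g = F x" by simp
  qed
  show "continuous_on {0..T} F" by (rule continuous_on_eq[OF c e])
qed

theorem proposition1:
  fixes N :: nat and T M :: real
    and \<alpha> :: "real \<Rightarrow> nat \<Rightarrow> real"
    and x v :: "real \<Rightarrow> nat \<Rightarrow> real ^ 'd"
  assumes N: "N \<ge> 1" and T: "T > 0" and M: "M > 0"
    and alpha: "\<alpha> \<in> U_M N T M"
    and solx: "\<forall>i<N. \<forall>t\<in>{0..T}. ((\<lambda>s. v s i) has_integral (x t i - x 0 i)) {0..t}"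
    and solv: "\<forall>i<N. \<forall>t\<in>{0..T}.
       ((\<lambda>s. (- \<alpha> s i) *\<^sub>R v s i
              + (1 - \<alpha> s i) *\<^sub>R ((1 / real N) *\<^sub>R (\<Sum>j<N. v s j - v s i))) has_integral (v t i - v 0 i)) {0..t}"
    and vbar_def: "vbar = (\<lambda>t. (1 / real N) *\<^sub>R (\<Sum>i<N. v t i))"
    and v0: "vbar 0 \<noteq> 0"
    and e_def: "e = vbar 0 /\<^sub>R norm (vbar 0)"
    and xi_def: "\<xi> = (\<lambda>i t. v t i \<bullet> e)"
    and xibar_def: "\<xi>bar = (\<lambda>t. (1 / real N) * (\<Sum>i<N. \<xi> i t))"
    and ordered: "\<forall>i j. i \<le> j \<and> j < N \<longrightarrow> \<xi> j 0 \<le> \<xi> i 0"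
  shows "(\<forall>t\<in>{0..T}. vbar t \<noteq> 0 \<and> \<xi>bar t > 0) \<and>
         (\<forall>\<tau>\<in>{0..T}. \<forall>i<N.
            (\<xi> i \<tau> \<ge> 0 \<longrightarrow> (\<forall>t\<in>{\<tau>..T}. \<xi> i t \<ge> 0)) \<and>
            (\<xi> i \<tau> > 0 \<longrightarrow> (\<forall>t\<in>{\<tau>..T}. \<xi> i t > 0)))"
proof -
  have Npos: "real N > 0" using N by auto
  have al: "\<And>t i. t \<in> {0..T} \<Longrightarrow> i < N \<Longrightarrow> 0 \<le> \<alpha> t i \<and> \<alpha> t i \<le> 1"
    using alpha by (auto simp: U_M_def)
  define \<phi> where "\<phi> = (\<lambda>i s. (- \<alpha> s i) * \<xi> i s + (1 - \<alpha> s i) * ((1 / real N) * (\<Sum>j<N. \<xi> j s - \<xi> i s)))"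
  have phi_eq: "\<phi> i s = - \<xi> i s + (1 - \<alpha> s i) * \<xi>bar s" for i s
  proof -
    have "(\<Sum>j<N. \<xi> j s - \<xi> i s) = (\<Sum>j<N. \<xi> j s) - real N * \<xi> i s"
      by (simp add: sum_subtractf)
    then have D: "(1 / real N) * (\<Sum>j<N. \<xi> j s - \<xi> i s) = \<xi>bar s - \<xi> i s"
      using Npos by (simp add: xibar_def field_simps)
    show ?thesis unfolding \<phi>_def D by (simp add: algebra_simps)
  qed
  have xi_int: "\<And>i t. i < N \<Longrightarrow> t \<in> {0..T} \<Longrightarrow> (\<phi> i has_integral (\<xi> i t - \<xi> i 0)) {0..t}"
  proof -
    fix i t assume it: "i < N" "t \<in> {0..T}"
    from has_integral_linear[OF solv[rule_format, OF it] bounded_linear_inner_left[of e]]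
    show "(\<phi> i has_integral (\<xi> i t - \<xi> i 0)) {0..t}"
      by (simp add: o_def \<phi>_def xi_def inner_diff_left inner_sum_left)
  qed
  define \<psi> where "\<psi> = (\<lambda>s. (1 / real N) * (\<Sum>i<N. \<phi> i s))"
  have xb_int: "\<And>t. t \<in> {0..T} \<Longrightarrow> (\<psi> has_integral (\<xi>bar t - \<xi>bar 0)) {0..t}"
  proof -
    fix t assume t: "t \<in> {0..T}"
    have "((\<lambda>s. \<Sum>i<N. \<phi> i s) has_integral (\<Sum>i<N. \<xi> i t - \<xi> i 0)) {0..t}"
      by (rule has_integral_sum) (auto intro: xi_int t)
    from has_integral_mult_right[OF this, of "1 / real N"]
    show "(\<psi> has_integral (\<xi>bar t - \<xi>bar 0)) {0..t}"
      by (simp add: \<psi>_def xibar_def sum_subtractf right_diff_distrib)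
  qed
  have psi_eq: "\<psi> s = - ((1 / real N) * (\<Sum>i<N. \<alpha> s i)) * \<xi>bar s" for s
  proof -
    have "(\<Sum>i<N. \<phi> i s) = - (\<Sum>i<N. \<xi> i s) + (\<Sum>i<N. (1 - \<alpha> s i)) * \<xi>bar s"
      by (simp add: phi_eq sum.distrib sum_distrib_right sum_negf sum_subtractf left_diff_distrib)
    also have "\<dots> = - (real N * \<xi>bar s) + (real N - (\<Sum>i<N. \<alpha> s i)) * \<xi>bar s"
      using Npos by (simp add: xibar_def sum_subtractf)
    finally show ?thesis using Npos by (simp add: \<psi>_def field_simps)
  qed
  have T0: "0 \<le> T" using T by simp
  have xb0: "\<xi>bar 0 > 0"
  proof -
    have "\<xi>bar 0 = vbar 0 \<bullet> e"
      by (simp add: xibar_def xi_def vbar_def inner_sum_left sum_distrib_left)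
    also have "\<dots> = norm (vbar 0)" using v0
      by (simp add: e_def power2_norm_eq_inner[symmetric] power2_eq_square)
    finally show ?thesis using v0 by simp
  qed
  have xb_c: "continuous_on {0..T} \<xi>bar" by (rule from0(2)[OF T0 xb_int])
  have xb_i: "\<And>s t. 0 \<le> s \<Longrightarrow> s \<le> t \<Longrightarrow> t \<le> T \<Longrightarrow> (\<psi> has_integral (\<xi>bar t - \<xi>bar s)) {s..t}"
    by (rule from0(1)[OF T0 xb_int])
  have xb_low: "- max (\<xi>bar r) 0 \<le> \<psi> r" if r: "r \<in> {0..T}" for r
  proof -
    have s0: "0 \<le> (\<Sum>i<N. \<alpha> r i)" using al[OF r] by (auto intro: sum_nonneg)
    have "(\<Sum>i<N. \<alpha> r i) \<le> (\<Sum>i<N. 1)" using al[OF r] by (intro sum_mono) auto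
    then have s1: "(1 / real N) * (\<Sum>i<N. \<alpha> r i) \<le> 1" using Npos by (simp add: field_simps)
    have s0': "0 \<le> (1 / real N) * (\<Sum>i<N. \<alpha> r i)" using s0 Npos by simp
    show ?thesis
    proof (cases "\<xi>bar r \<ge> 0")
      case True
      then have "(1 / real N) * (\<Sum>i<N. \<alpha> r i) * \<xi>bar r \<le> 1 * \<xi>bar r"
        using s1 by (intro mult_right_mono) auto
      then show ?thesis using True by (simp add: psi_eq)
    next
      case False
      then have "(1 / real N) * (\<Sum>i<N. \<alpha> r i) * \<xi>bar r \<le> 0"
        using s0' False by (intro mult_nonneg_nonpos) auto
      then show ?thesis using False by (simp add: psi_eq)
    qed
  qed
  have xbpos: "\<xi>bar t > 0" if t: "t \<in> {0..T}" for t
    by (rule key_pos[OF xb_c xb_i xb_low xb0 t])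
  have vbne: "vbar t \<noteq> 0" if t: "t \<in> {0..T}" for t
  proof
    assume "vbar t = 0"
    moreover have "\<xi>bar t = vbar t \<bullet> e"
      by (simp add: xibar_def xi_def vbar_def inner_sum_left sum_distrib_left)
    ultimately have "\<xi>bar t = 0" by simp
    then show False using xbpos[OF t] by simp
  qed
  have part2: "(\<xi> i \<tau> \<ge> 0 \<longrightarrow> (\<forall>t\<in>{\<tau>..T}. \<xi> i t \<ge> 0)) \<and>
            (\<xi> i \<tau> > 0 \<longrightarrow> (\<forall>t\<in>{\<tau>..T}. \<xi> i t > 0))" if \<tau>: "\<tau> \<in> {0..T}" and i: "i < N" for \<tau> i
  proof -
    have ii: "\<And>t. t \<in> {0..T} \<Longrightarrow> (\<phi> i has_integral (\<xi> i t - \<xi> i 0)) {0..t}"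
      using xi_int i by auto
    have c: "continuous_on {\<tau>..T} (\<xi> i)"
      using from0(2)[OF T0 ii] \<tau> by (auto intro: continuous_on_subset)
    have int: "\<And>s t. \<tau> \<le> s \<Longrightarrow> s \<le> t \<Longrightarrow> t \<le> T \<Longrightarrow> (\<phi> i has_integral (\<xi> i t - \<xi> i s)) {s..t}"
      using from0(1)[OF T0 ii] \<tau> by auto
    have low: "\<And>r. r \<in> {\<tau>..T} \<Longrightarrow> - max (\<xi> i r) 0 \<le> \<phi> i r"
    proof -
      fix r assume r: "r \<in> {\<tau>..T}"
      then have r0: "r \<in> {0..T}" using \<tau> by auto
      have "0 \<le> (1 - \<alpha> r i) * \<xi>bar r" using al[OF r0 i] xbpos[OF r0] by simp
      then show "- max (\<xi> i r) 0 \<le> \<phi> i r" by (simp add: phi_eq)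
    qed
    show ?thesis using key_nonneg[OF c int low] key_pos[OF c int low] by auto
  qed
  show ?thesis using xbpos vbne part2 by auto
qed
end
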